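(* For an undirected graph $G=(V,E)$ with edge capacities $u_e\in\mathbb{Z}_{\ge0}$ for all $e\in E$, terminals $s_1,s_2,t_1,t_2$, and nonnegative integers $k_1,k_2$, it holds that $2\,c_{2k_1,2k_2}(G)\ge c_{k_1,k_2}(G)$.
   Context: $\delta(S)$ denotes the set of edges with exactly one endpoint in $S$. Say $S\subseteq V$ separates commodity $i$ if exactly one of $s_i,t_i$ lies in $S$. For nonnegative integers $a,b$ define $\mathrm{dem}_{a,b}(S)=a$ if $S$ separates commodity 1 but not commodity 2, $=b$ if $S$ separates commodity 2 but not commodity 1, $=a+b$ if $S$ separates both commodities, and $=0$ otherwise. Define $c_{a,b}(S)=\max\{x\in\mathbb{R}_{\ge0}: \exists\, n(e)\in\mathbb{Z}_{\ge0}\ (e\in\delta(S))\text{ with } n(e)x\le u_e\ \forall e\in\delta(S),\ \sum_{e\in\delta(S)}n(e)\ge \mathrm{dem}_{a,b}(S)\}$ and $c_{a,b}(G)=\min\{c_{a,b}(S): S\subseteq V,\ \mathrm{dem}_{a,b}(S)\neq 0\}$. *)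

theory Defs
  imports "HOL-Library.Extended_Real"
begin

text \<open>An undirected (multi)graph: finite vertex set V, finite edge set E, each edge
  e has endpoints ep e = (x, y) (orientation irrelevant). Capacities u e :: nat.\<close>

definition cut :: "'e set \<Rightarrow> ('e \<Rightarrow> 'v \<times> 'v) \<Rightarrow> 'v set \<Rightarrow> 'e set" where
  "cut E ep S = {e \<in> E. (fst (ep e) \<in> S) \<noteq> (snd (ep e) \<in> S)}"

definition separates :: "'v set \<Rightarrow> 'v \<Rightarrow> 'v \<Rightarrow> bool" where
  "separates S s t \<longleftrightarrow> (s \<in> S) \<noteq> (t \<in> S)"

definition dem :: "nat \<Rightarrow> nat \<Rightarrow> 'v \<Rightarrow> 'v \<Rightarrow> 'v \<Rightarrow> 'v \<Rightarrow> 'v set \<Rightarrow> nat" where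
  "dem a b s1 t1 s2 t2 S =
     (if separates S s1 t1 \<and> \<not> separates S s2 t2 then a
      else if separates S s2 t2 \<and> \<not> separates S s1 t1 then b
      else if separates S s1 t1 \<and> separates S s2 t2 then a + b
      else 0)"

text \<open>c_{a,b}(S): maximum of the feasible x (as an extended real; the maximum of an
  empty set is -\<infinity>, which only arises when the cut is empty).\<close>
definition cap_cut :: "'e set \<Rightarrow> ('e \<Rightarrow> 'v \<times> 'v) \<Rightarrow> ('e \<Rightarrow> nat) \<Rightarrow> nat \<Rightarrow> nat
    \<Rightarrow> 'v \<Rightarrow> 'v \<Rightarrow> 'v \<Rightarrow> 'v \<Rightarrow> 'v set \<Rightarrow> ereal" where
  "cap_cut E ep u a b s1 t1 s2 t2 S =
     Sup (ereal ` {x::real. x \<ge> 0 \<and> (\<exists>n :: 'e \<Rightarrow> nat.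
        (\<forall>e \<in> cut E ep S. real (n e) * x \<le> real (u e)) \<and>
        (\<Sum>e \<in> cut E ep S. n e) \<ge> dem a b s1 t1 s2 t2 S)})"

text \<open>c_{a,b}(G): minimum over vertex subsets with nonzero demand (Inf of empty = \<infinity>).\<close>
definition cap_graph :: "'v set \<Rightarrow> 'e set \<Rightarrow> ('e \<Rightarrow> 'v \<times> 'v) \<Rightarrow> ('e \<Rightarrow> nat) \<Rightarrow> nat \<Rightarrow> nat
    \<Rightarrow> 'v \<Rightarrow> 'v \<Rightarrow> 'v \<Rightarrow> 'v \<Rightarrow> ereal" where
  "cap_graph V E ep u a b s1 t1 s2 t2 =
     Inf (cap_cut E ep u a b s1 t1 s2 t2 ` {S. S \<subseteq> V \<and> dem a b s1 t1 s2 t2 S \<noteq> 0})"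

end

theory Submission
  imports Defs
begin

lemma dem_double: "dem (2*a) (2*b) s1 t1 s2 t2 S = 2 * dem a b s1 t1 s2 t2 S"
  by (simp add: dem_def)

lemma cut_ineq:
  fixes E :: "'e set" and ep :: "'e \<Rightarrow> 'v \<times> 'v"
  shows "cap_cut E ep u a b s1 t1 s2 t2 S \<le> 2 * cap_cut E ep u (2*a) (2*b) s1 t1 s2 t2 S"
proof -
  let ?C = "cut E ep S"
  let ?d = "dem a b s1 t1 s2 t2 S"
  show ?thesis unfolding cap_cut_def
  proof (rule Sup_least)
    fix y assume "y \<in> ereal ` {x::real. x \<ge> 0 \<and> (\<exists>n :: 'e \<Rightarrow> nat.
        (\<forall>e \<in> ?C. real (n e) * x \<le> real (u e)) \<and> (\<Sum>e \<in> ?C. n e) \<ge> ?d)}"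
    then obtain x n where y: "y = ereal x" and x0: "x \<ge> 0"
      and hn: "\<forall>e \<in> ?C. real (n e) * x \<le> real (u e)" and hs: "(\<Sum>e \<in> ?C. n e) \<ge> ?d"
      by blast
    have mem: "x/2 \<in> {x::real. x \<ge> 0 \<and> (\<exists>n :: 'e \<Rightarrow> nat.
        (\<forall>e \<in> ?C. real (n e) * x \<le> real (u e)) \<and>
        (\<Sum>e \<in> ?C. n e) \<ge> dem (2*a) (2*b) s1 t1 s2 t2 S)}"
    proof -
      have a: "\<forall>e\<in>?C. real (2 * n e) * (x / 2) \<le> real (u e)" using hn by simp
      have s2: "(\<Sum>e\<in>?C. 2 * n e) = 2 * (\<Sum>e\<in>?C. n e)" by (rule sum_distrib_left[symmetric])
      have b: "dem (2*a) (2*b) s1 t1 s2 t2 S \<le> (\<Sum>e\<in>?C. 2 * n e)"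
        unfolding s2 dem_double using hs by linarith
      have x2: "x/2 \<ge> 0" using x0 by simp
      show ?thesis unfolding mem_Collect_eq
        apply (rule conjI[OF x2])
        apply (rule exI[of _ "\<lambda>e. 2 * n e"])
        using a b by simp
    qed
    from mem have "ereal (x/2) \<le> Sup (ereal ` {x::real. x \<ge> 0 \<and> (\<exists>n :: 'e \<Rightarrow> nat.
        (\<forall>e \<in> ?C. real (n e) * x \<le> real (u e)) \<and>
        (\<Sum>e \<in> ?C. n e) \<ge> dem (2*a) (2*b) s1 t1 s2 t2 S)})"
      by (intro Sup_upper imageI)
    then have "2 * ereal (x/2) \<le> 2 * Sup (ereal ` {x::real. x \<ge> 0 \<and> (\<exists>n :: 'e \<Rightarrow> nat.
        (\<forall>e \<in> ?C. real (n e) * x \<le> real (u e)) \<and>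
        (\<Sum>e \<in> ?C. n e) \<ge> dem (2*a) (2*b) s1 t1 s2 t2 S)})"
      by (intro ereal_mult_left_mono) auto
    moreover have "2 * ereal (x/2) = y" using y by simp
    ultimately show "y \<le> 2 * Sup (ereal ` {x::real. x \<ge> 0 \<and> (\<exists>n :: 'e \<Rightarrow> nat.
        (\<forall>e \<in> ?C. real (n e) * x \<le> real (u e)) \<and>
        (\<Sum>e \<in> ?C. n e) \<ge> dem (2*a) (2*b) s1 t1 s2 t2 S)})" by metis
  qed
qed

theorem mainTheorem4:
  fixes V :: "'v set" and E :: "'e set" and ep :: "'e \<Rightarrow> 'v \<times> 'v"
    and u :: "'e \<Rightarrow> nat" and s1 t1 s2 t2 :: 'v and k1 k2 :: nat
  assumes "finite V" and "finite E"
    and "\<forall>e \<in> E. fst (ep e) \<in> V \<and> snd (ep e) \<in> V"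
    and "s1 \<in> V" and "t1 \<in> V" and "s2 \<in> V" and "t2 \<in> V"
  shows "2 * cap_graph V E ep u (2 * k1) (2 * k2) s1 t1 s2 t2
           \<ge> cap_graph V E ep u k1 k2 s1 t1 s2 t2"
proof -
  let ?A = "{S. S \<subseteq> V \<and> dem k1 k2 s1 t1 s2 t2 S \<noteq> 0}"
  let ?f = "cap_cut E ep u (2*k1) (2*k2) s1 t1 s2 t2"
  let ?g = "cap_cut E ep u k1 k2 s1 t1 s2 t2"
  have A: "{S. S \<subseteq> V \<and> dem (2*k1) (2*k2) s1 t1 s2 t2 S \<noteq> 0} = ?A"
    by (simp add: dem_double)
  have sub: "?A \<subseteq> Pow V" by blast
  have fin: "finite ?A" using assms(1) sub finite_subset by blast
  show ?thesis
  proof (cases "?A = {}")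
    case True
    then show ?thesis unfolding cap_graph_def A True by (simp add: top_ereal_def)
  next
    case False
    have fin2: "finite (?f ` ?A)" using fin by (rule finite_imageI)
    have ne: "?f ` ?A \<noteq> {}" using False by blast
    have "Inf (?f ` ?A) = Min (?f ` ?A)" using cInf_eq_Min[OF fin2 ne] .
    then have "Inf (?f ` ?A) \<in> ?f ` ?A" using Min_in[OF fin2 ne] by simp
    then obtain S where S: "S \<in> ?A" and eq: "Inf (?f ` ?A) = ?f S" by blast
    have "Inf (?g ` ?A) \<le> ?g S" using S by (rule INF_lower)
    also have "\<dots> \<le> 2 * ?f S" by (rule cut_ineq)
    finally show ?thesis unfolding cap_graph_def A eq .
  qed
qed

end
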